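(* Let $d\ge1$, let $\mu$ be a probability measure on $(0,+\infty)$ and fix $\alpha>0$. Then, almost surely, for every $x\in\mathbb{R}^d\setminus B$, $$\frac{T(B,x)}{\|x\|}\ge \alpha\left(1-S_{\|x\|}(\xi_\alpha)-\frac{1}{\|x\|}\right).$$
   Context: $B_r$ is the closed Euclidean ball of radius $r$ centered at $0$, $B=B_1$. Let $\chi$ be a Poisson point process on $\mathbb{R}^d\times[0,+\infty)\times(0,+\infty)$ with intensity the product of Lebesgue measure on $\mathbb{R}^d\times[0,+\infty)$ and $\mu$. Passage times: $\tau(x,x)=0$; for each $(c,t,r)\in\chi$ and $y\in(c+B_r)\setminus\{c\}$, $\tau(c,y)=t$; otherwise $\tau(x,y)=+\infty$. A path is a finite sequence $\pi=(x_0,\dots,x_k)$ of distinct points of $\mathbb{R}^d$; $T(\pi)=\sum_{i=0}^{k-1}\tau(x_i,x_{i+1})$, and $T(A,x)=\inf\{T(\pi):\pi\text{ a path from some }a\in A\text{ to }x\}$. Define $\xi_\alpha=\{(c,r):\exists t\le\alpha r,\ (c,t,r)\in\chi\}$, a Poisson point process on $\mathbb{R}^d\times(0,+\infty)$ with intensity Lebesgue $\otimes\,\alpha r\mu(dr)$. For $x\in\mathbb{R}^d$, $r(x)=r$ if $(x,r)\in\xi_\alpha$ (a.s. unique), and $r(x)=0$ otherwise. For a path $\pi=(x_0,\dots,x_n)$, $|\pi|=\sum_{i=0}^{n-1}\|x_{i+1}-x_i\|$ and $A(\pi)=\sum_{i=0}^n r(x_i)$. For $l>0$, $S_l(\xi_\alpha)=\sup\{A(\pi)/|\pi|\}$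 over all paths with $x_0=0$ and $|\pi|>l$. *)

theory Defs
  imports "HOL-Probability.Probability"
begin

text \<open>Points of the Poisson process: (centre c, time t, radius r).\<close>
type_synonym 'd pt = "(real ^ 'd) \<times> real \<times> real"

definition intensity :: "real measure \<Rightarrow> ('d::finite) pt measure" where
  "intensity \<mu> = lborel \<Otimes>\<^sub>M (density lborel (indicator {0..}) \<Otimes>\<^sub>M \<mu>)"

definition poisson_point_process :: "'a measure \<Rightarrow> ('a \<Rightarrow> 'b set) \<Rightarrow> 'b measure \<Rightarrow> bool" where
  "poisson_point_process M N \<nu> \<longleftrightarrow>
     prob_space M \<and>
     (\<forall>A \<in> sets \<nu>. emeasure \<nu> A < \<infinity> \<longrightarrow>
        (\<lambda>\<omega>. card (N \<omega> \<inter> A)) \<in> measurable M (count_space UNIV) \<and>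
        (AE \<omega> in M. finite (N \<omega> \<inter> A)) \<and>
        (\<forall>k::nat. measure M {\<omega> \<in> space M. card (N \<omega> \<inter> A) = k}
             = measure \<nu> A ^ k / fact k * exp (- measure \<nu> A))) \<and>
     (\<forall>A \<in> sets \<nu>. emeasure \<nu> A = \<infinity> \<longrightarrow> (AE \<omega> in M. infinite (N \<omega> \<inter> A))) \<and>
     (\<forall>I (A :: nat \<Rightarrow> 'b set). finite I \<longrightarrow> (\<forall>i\<in>I. A i \<in> sets \<nu> \<and> emeasure \<nu> (A i) < \<infinity>)
        \<longrightarrow> disjoint_family_on A I \<longrightarrow>
        prob_space.indep_vars M (\<lambda>_. count_space UNIV) (\<lambda>i \<omega>. card (N \<omega> \<inter> A i)) I)"

definition tau :: "('d::finite) pt set \<Rightarrow> real ^ 'd \<Rightarrow> real ^ 'd \<Rightarrow> ereal" where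
  "tau chi x y =
     (if x = y then 0
      else if \<exists>t r. (x, t, r) \<in> chi \<and> y \<in> cball x r
        then ereal (SOME t. \<exists>r. (x, t, r) \<in> chi \<and> y \<in> cball x r)
      else \<infinity>)"

definition is_path :: "'a list \<Rightarrow> bool" where
  "is_path p \<longleftrightarrow> p \<noteq> [] \<and> distinct p"

definition path_time :: "('d::finite) pt set \<Rightarrow> (real ^ 'd) list \<Rightarrow> ereal" where
  "path_time chi p = (\<Sum>i<length p - 1. tau chi (p ! i) (p ! Suc i))"

definition passage_time :: "('d::finite) pt set \<Rightarrow> (real ^ 'd) set \<Rightarrow> real ^ 'd \<Rightarrow> ereal" where
  "passage_time chi A x =
     (INF p \<in> {p. is_path p \<and> hd p \<in> A \<and> last p = x}. path_time chi p)"

definition xi :: "real \<Rightarrow> ('d::finite) pt set \<Rightarrow> ((real ^ 'd) \<times> real) set" where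
  "xi \<alpha> chi = {(c, r). \<exists>t \<le> \<alpha> * r. (c, t, r) \<in> chi}"

text \<open>r(x): the radius attached to x in xi if there is one (a.s. unique), else 0.\<close>
definition rad :: "((real ^ 'd) \<times> real) set \<Rightarrow> real ^ 'd \<Rightarrow> real" where
  "rad \<xi> x = (if \<exists>r. (x, r) \<in> \<xi> then (SOME r. (x, r) \<in> \<xi>) else 0)"

definition path_len :: "(real ^ 'd) list \<Rightarrow> real" where
  "path_len p = (\<Sum>i<length p - 1. dist (p ! i) (p ! Suc i))"

definition path_A :: "((real ^ 'd) \<times> real) set \<Rightarrow> (real ^ 'd) list \<Rightarrow> real" where
  "path_A \<xi> p = (\<Sum>i<length p. rad \<xi> (p ! i))"

definition S :: "real \<Rightarrow> ((real ^ 'd) \<times> real) set \<Rightarrow> ereal" where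
  "S l \<xi> = (SUP p \<in> {p. is_path p \<and> hd p = 0 \<and> path_len p > l}.
              ereal (path_A \<xi> p / path_len p))"

end

theory Submission
  imports Defs
begin


locale goodcfg =
  fixes C :: "('d::finite) pt set" and \<alpha> :: real
  assumes pos: "\<And>c t r. (c,t,r) \<in> C \<Longrightarrow> 0 \<le> t \<and> 0 < r"
    and uniq: "\<And>p q. p \<in> C \<Longrightarrow> q \<in> C \<Longrightarrow> fst p = fst q \<Longrightarrow> p = q"
    and apos: "\<alpha> > 0"
begin

lemma rad_nonneg: "rad (xi \<alpha> C) c \<ge> 0"
proof (cases "\<exists>r. (c, r) \<in> xi \<alpha> C")
  case True
  then have "(c, SOME r. (c, r) \<in> xi \<alpha> C) \<in> xi \<alpha> C" by (rule someI_ex)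
  then show ?thesis using pos unfolding rad_def xi_def using True by force
qed (simp add: rad_def)

lemma rad_eq: assumes "(c,t,r) \<in> C" "t \<le> \<alpha> * r" shows "rad (xi \<alpha> C) c = r"
proof -
  have m: "(c, r) \<in> xi \<alpha> C" using assms unfolding xi_def by auto
  have "(SOME r. (c, r) \<in> xi \<alpha> C) = r"
  proof (rule some_equality)
    fix r' assume "(c, r') \<in> xi \<alpha> C"
    then obtain t' where "(c,t',r') \<in> C" unfolding xi_def by auto
    then show "r' = r" using uniq[of "(c,t',r')" "(c,t,r)"] assms by auto
  qed (rule m)
  then show ?thesis using m unfolding rad_def by auto
qed

lemma tau_nonneg: "tau C u v \<ge> 0"
proof -
  { assume ne: "u \<noteq> v" and ex: "\<exists>t r. (u, t, r) \<in> C \<and> v \<in> cball u r"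
    then obtain t r where tr: "(u, t, r) \<in> C" "v \<in> cball u r" by auto
    have "(SOME t. \<exists>r. (u, t, r) \<in> C \<and> v \<in> cball u r) = t"
    proof (rule some_equality)
      fix t' assume "\<exists>r. (u, t', r) \<in> C \<and> v \<in> cball u r"
      then obtain r' where "(u, t', r') \<in> C" by auto
      then show "t' = t" using uniq[of "(u,t',r')" "(u,t,r)"] tr by auto
    qed (use tr in auto)
    then have "tau C u v = ereal t" unfolding tau_def using ne ex by auto
    then have ?thesis using pos[OF tr(1)] by auto }
  then show ?thesis unfolding tau_def by auto
qed

lemma tau_lower: "tau C u v \<ge> ereal (\<alpha> * (dist u v - rad (xi \<alpha> C) u))"
proof (cases "u = v")
  case True then show ?thesis using rad_nonneg[of u] apos
    by (simp add: tau_def mult_nonneg_nonpos)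
next
  case ne: False
  show ?thesis
  proof (cases "\<exists>t r. (u, t, r) \<in> C \<and> v \<in> cball u r")
    case ex: True
    then obtain t r where tr: "(u, t, r) \<in> C" "v \<in> cball u r" by auto
    have "(SOME t. \<exists>r. (u, t, r) \<in> C \<and> v \<in> cball u r) = t"
    proof (rule some_equality)
      fix t' assume "\<exists>r. (u, t', r) \<in> C \<and> v \<in> cball u r"
      then obtain r' where "(u, t', r') \<in> C" by auto
      then show "t' = t" using uniq[of "(u,t',r')" "(u,t,r)"] tr by auto
    qed (use tr in auto)
    then have e: "tau C u v = ereal t" unfolding tau_def using ne ex by auto
    have "\<alpha> * (dist u v - rad (xi \<alpha> C) u) \<le> t"
    proof (cases "t \<le> \<alpha> * r")
      case True
      then have "rad (xi \<alpha> C) u = r" using rad_eq tr by auto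
      then have "\<alpha> * (dist u v - rad (xi \<alpha> C) u) \<le> 0" using tr(2) apos
        by (simp add: mult_nonneg_nonpos)
      then show ?thesis using pos[OF tr(1)] by linarith
    next
      case False
      have "\<alpha> * (dist u v - rad (xi \<alpha> C) u) \<le> \<alpha> * r"
        using tr(2) rad_nonneg[of u] apos by (intro mult_left_mono) auto
      then show ?thesis using False by linarith
    qed
    then show ?thesis using e by simp
  next
    case False
    then have "tau C u v = \<infinity>" unfolding tau_def using ne by (simp del: mem_cball)
    then show ?thesis by simp
  qed
qed

end

lemma path_time_Cons2: "path_time C (u # v # r) = tau C u v + path_time C (v # r)"
  unfolding path_time_def by (simp add: sum.lessThan_Suc_shift del: sum.lessThan_Suc)
lemma path_time_single: "path_time C [u] = 0"
  unfolding path_time_def by simp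
lemma path_len_Cons2: "path_len (u # v # r) = dist u v + path_len (v # r)"
  unfolding path_len_def by (simp add: sum.lessThan_Suc_shift del: sum.lessThan_Suc)
lemma path_len_single: "path_len [u] = 0"
  unfolding path_len_def by simp
lemma path_A_Cons: "path_A X (u # r) = rad X u + path_A X r"
  unfolding path_A_def by (simp add: sum.lessThan_Suc_shift del: sum.lessThan_Suc)
lemma path_A_Nil: "path_A X [] = 0"
  unfolding path_A_def by simp

lemma path_len_snoc: "q \<noteq> [] \<Longrightarrow> path_len (q @ [y]) = path_len q + dist (last q) y"
proof (induction q rule: induct_list012)
  case (3 x y' zs) then show ?case by (simp add: path_len_Cons2)
qed (auto simp: path_len_Cons2 path_len_single)

lemma path_A_snoc: "path_A X (q @ [y]) = path_A X q + rad X y"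
  by (induction q) (auto simp: path_A_Cons path_A_Nil)

lemma path_len_ge: "q \<noteq> [] \<Longrightarrow> path_len q \<ge> dist (hd q) (last q)"
proof (induction q rule: induct_list012)
  case (3 x y zs)
  then show ?case using dist_triangle[of x "last (y#zs)" y]
    by (simp add: path_len_Cons2)
qed (auto simp: path_len_single)

context goodcfg begin

lemma path_A_nonneg: "path_A (xi \<alpha> C) q \<ge> 0"
  by (induction q) (auto simp: path_A_Cons path_A_Nil intro!: add_nonneg_nonneg rad_nonneg)

lemma path_time_nonneg: "path_time C q \<ge> 0"
proof (induction q rule: induct_list012)
  case (3 x y zs) then show ?case using tau_nonneg[of x y] by (simp add: path_time_Cons2)
qed (auto simp: path_time_single path_time_def)

lemma path_time_lower: "q \<noteq> [] \<Longrightarrow>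
   path_time C q \<ge> ereal (\<alpha> * (path_len q - path_A (xi \<alpha> C) q))"
proof (induction q rule: induct_list012)
  case (2 x) then show ?case using rad_nonneg[of x] apos
    by (simp add: path_time_single path_len_single path_A_Cons path_A_Nil mult_nonneg_nonpos)
next
  case (3 x y zs)
  have "ereal (\<alpha> * (path_len (x # y # zs) - path_A (xi \<alpha> C) (x # y # zs)))
     = ereal (\<alpha> * (dist x y - rad (xi \<alpha> C) x)) + ereal (\<alpha> * (path_len (y # zs) - path_A (xi \<alpha> C) (y # zs)))"
    by (simp add: path_len_Cons2 path_A_Cons algebra_simps)
  also have "\<dots> \<le> tau C x y + path_time C (y # zs)"
    using 3 tau_lower[of x y] by (intro add_mono) auto
  finally show ?case by (simp add: path_time_Cons2)
qed simp

lemma path_time_suffix: "b \<noteq> [] \<Longrightarrow> path_time C (a @ b) \<ge> path_time C b"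
proof (induction a)
  case (Cons x a)
  then obtain y r where yr: "a @ b = y # r" by (cases "a @ b") auto
  then show ?case using Cons tau_nonneg[of x y]
    by (simp add: path_time_Cons2) (metis add_increasing)
qed simp

end

lemma exists_near:
  fixes x :: "real ^ 'd" and Q :: "(real ^ 'd) set"
  assumes "x \<noteq> 0" "finite Q" "\<epsilon> > 0"
  shows "\<exists>y. y \<notin> Q \<and> 0 < dist x y \<and> dist x y \<le> \<epsilon>"
proof -
  define f where "f k = (1 + \<epsilon> / (norm x * (real k + 1))) *\<^sub>R x" for k :: nat
  have nx: "norm x > 0" using assms by auto
  have inj: "inj f"
  proof (rule injI)
    fix a b assume "f a = f b"
    then have "1 + \<epsilon> / (norm x * (real a + 1)) = 1 + \<epsilon> / (norm x * (real b + 1))"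
      using assms(1) unfolding f_def by (simp add: scaleR_cancel_right)
    then show "a = b" using nx assms(3) by (auto simp: field_simps)
  qed
  have "\<not> range f \<subseteq> Q"
    using inj assms(2) finite_subset range_inj_infinite by blast
  then obtain k where k: "f k \<notin> Q" by auto
  have d: "dist x (f k) = \<epsilon> / (real k + 1)"
  proof -
    have "x - f k = (- (\<epsilon> / (norm x * (real k + 1)))) *\<^sub>R x"
      unfolding f_def by (simp add: algebra_simps)
    then have "dist x (f k) = \<bar>\<epsilon> / (norm x * (real k + 1))\<bar> * norm x"
      by (simp add: dist_norm)
    also have "\<dots> = \<epsilon> / (real k + 1)" using nx assms(3) by (simp add: abs_of_pos)
    finally show ?thesis .
  qed
  have "\<epsilon> / (real k + 1) \<le> \<epsilon>" using assms(3) by (simp add: divide_le_eq)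
  then show ?thesis using k d assms(3) by (intro exI[of _ "f k"]) auto
qed

context goodcfg begin

lemma A_le_sl:
  assumes q: "is_path q" "hd q = 0" "last q = x" and x: "norm x > 1"
    and Se: "S (norm x) (xi \<alpha> C) = ereal s"
  shows "path_A (xi \<alpha> C) q \<le> s * path_len q \<and> s \<ge> 0"
proof -
  have qne: "q \<noteq> []" using q by (simp add: is_path_def)
  have lq: "path_len q \<ge> norm x" using path_len_ge[OF qne] q by simp
  have x0: "x \<noteq> 0" using x by auto
  have key: "path_A (xi \<alpha> C) q \<le> s * (path_len q + d) \<and> 0 \<le> s" if kp: "0 < d" "d \<le> \<epsilon>" "\<epsilon> > 0"
     "\<exists>y. y \<notin> set q \<and> dist x y = d" for d \<epsilon>
  proof -
    obtain y where y: "y \<notin> set q" "dist x y = d" using kp(4) by blast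
    define q' where "q' = q @ [y]"
    have len': "path_len q' = path_len q + d" using path_len_snoc[OF qne] q y q'_def by simp
    have A': "path_A (xi \<alpha> C) q' = path_A (xi \<alpha> C) q + rad (xi \<alpha> C) y"
      by (simp add: q'_def path_A_snoc)
    have mem: "is_path q' \<and> hd q' = 0 \<and> path_len q' > norm x"
      using q y qne len' lq kp(1) by (auto simp: q'_def is_path_def)
    then have "ereal (path_A (xi \<alpha> C) q' / path_len q') \<le> S (norm x) (xi \<alpha> C)"
      unfolding S_def by (intro SUP_upper) auto
    then have le: "path_A (xi \<alpha> C) q' / path_len q' \<le> s" using Se by simp
    have lpos: "path_len q' > 0" using mem x by linarith
    then have "path_A (xi \<alpha> C) q' \<le> s * path_len q'" using le by (simp add: divide_le_eq)
    moreover have "0 \<le> path_A (xi \<alpha> C) q' / path_len q'" using path_A_nonneg lpos by simp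
    ultimately show ?thesis using A' len' rad_nonneg[of y] le by auto
  qed
  have ex: "\<exists>d. 0 < d \<and> d \<le> \<epsilon> \<and> (\<exists>y. y \<notin> set q \<and> dist x y = d)" if e: "\<epsilon> > 0" for \<epsilon>
  proof -
    obtain y where "y \<notin> set q" "0 < dist x y" "dist x y \<le> \<epsilon>"
      using exists_near[OF x0 _ e, of "set q"] by auto
    then show ?thesis by blast
  qed
  obtain d0 where "0 < d0" "d0 \<le> 1" "\<exists>y. y \<notin> set q \<and> dist x y = d0" using ex[of 1] by auto
  then have s0: "s \<ge> 0" using key[of d0 1] by auto
  have "path_A (xi \<alpha> C) q \<le> s * path_len q + e" if ep: "e > 0" for e
  proof -
    obtain d where d: "0 < d" "d \<le> e / (s + 1)" "\<exists>y. y \<notin> set q \<and> dist x y = d"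
      using ex[of "e / (s+1)"] ep s0 by auto
    have "path_A (xi \<alpha> C) q \<le> s * path_len q + s * d" using key[OF d(1,2) _ d(3)] ep s0
      by (simp add: algebra_simps)
    also have "s * d \<le> s * (e / (s + 1))" using d s0 by (intro mult_left_mono) auto
    also have "s * (e / (s + 1)) \<le> e" using s0 ep by (simp add: field_simps)
    finally show ?thesis by simp
  qed
  then show ?thesis using s0 field_le_epsilon by blast
qed

lemma path_reduce:
  assumes p: "is_path p" "hd p \<in> cball 0 1" "last p = x"
  shows "\<exists>q. is_path q \<and> hd q = 0 \<and> last q = x \<and>
     path_time C p \<ge> ereal (\<alpha> * (path_len q - 1 - path_A (xi \<alpha> C) q))"
proof (cases "0 \<in> set p")
  case True
  then obtain a b where ab: "p = a @ 0 # b" by (meson split_list)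
  have "path_time C p \<ge> path_time C (0 # b)" using path_time_suffix[of "0 # b" a] ab by simp
  moreover have "path_time C (0 # b) \<ge> ereal (\<alpha> * (path_len (0#b) - path_A (xi \<alpha> C) (0#b)))"
    by (rule path_time_lower) simp
  moreover have "ereal (\<alpha> * (path_len (0#b) - 1 - path_A (xi \<alpha> C) (0#b))) \<le>
       ereal (\<alpha> * (path_len (0#b) - path_A (xi \<alpha> C) (0#b)))" using apos by simp
  moreover have "is_path (0 # b)" "last (0 # b) = x" using p ab by (auto simp: is_path_def)
  ultimately show ?thesis by (intro exI[of _ "0 # b"]) (simp, meson dual_order.trans ereal_less_eq(3))
next
  case False
  obtain h r where hr: "p = h # r" using p by (cases p) (auto simp: is_path_def)
  have lp: "path_len (0 # p) = dist 0 h + path_len p" by (simp add: hr path_len_Cons2)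
  have dh: "dist 0 h \<le> 1" using p hr by simp
  have Ap: "path_A (xi \<alpha> C) (0 # p) = rad (xi \<alpha> C) 0 + path_A (xi \<alpha> C) p" by (simp add: path_A_Cons)
  have "ereal (\<alpha> * (path_len (0#p) - 1 - path_A (xi \<alpha> C) (0#p))) \<le>
       ereal (\<alpha> * (path_len p - path_A (xi \<alpha> C) p))"
    using apos lp dh Ap rad_nonneg[of 0] by (auto intro!: mult_left_mono)
  also have "\<dots> \<le> path_time C p" using path_time_lower[of p] hr by simp
  finally show ?thesis using p False hr
    by (intro exI[of _ "0 # p"]) (auto simp: is_path_def)
qed

lemma main_det:
  assumes "x \<notin> cball 0 (1::real)"
  shows "passage_time C (cball 0 1) x / ereal (norm x)
             \<ge> ereal \<alpha> * (1 - S (norm x) (xi \<alpha> C) - ereal (1 / norm x))"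
proof -
  have x: "norm x > 1" using assms by simp
  have x0: "x \<noteq> 0" using x by auto
  define R where "R = ereal \<alpha> * (1 - S (norm x) (xi \<alpha> C) - ereal (1 / norm x))"
  have mem: "is_path [0, 2 *\<^sub>R x] \<and> hd [0, 2 *\<^sub>R x] = 0 \<and> path_len [0, 2 *\<^sub>R x] > norm x"
    using x0 x by (simp add: is_path_def path_len_Cons2 path_len_single)
  have "ereal (path_A (xi \<alpha> C) [0, 2 *\<^sub>R x] / path_len [0, 2 *\<^sub>R x]) \<le> S (norm x) (xi \<alpha> C)"
    unfolding S_def using mem by (intro SUP_upper) auto
  then have Sninf: "S (norm x) (xi \<alpha> C) \<noteq> -\<infinity>" by auto
  have "ereal (norm x) * R \<le> path_time C p"
    if p: "is_path p" "hd p \<in> cball 0 1" "last p = x" for p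
  proof (cases "S (norm x) (xi \<alpha> C)")
    case PInf
    have o: "(1::ereal) - \<infinity> = -\<infinity>" by (simp add: one_ereal_def)
    then have "R = -\<infinity>" unfolding R_def using apos PInf by simp
    then show ?thesis using x path_time_nonneg[of p] by simp
  next
    case MInf then show ?thesis using Sninf by simp
  next
    case (real s)
    then have Rs: "R = ereal (\<alpha> * (1 - s - 1 / norm x))" unfolding R_def by (simp add: one_ereal_def)
    show ?thesis
    proof (cases "s \<ge> 1")
      case True
      have "0 < 1 / norm x" using x0 by simp
      then have "1 - s - 1 / norm x \<le> 0" using True by linarith
      then have "\<alpha> * (1 - s - 1 / norm x) \<le> 0" using apos
        by (intro mult_nonneg_nonpos) auto
      then have "norm x * (\<alpha> * (1 - s - 1 / norm x)) \<le> 0"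
        by (rule mult_nonneg_nonpos[OF norm_ge_zero])
      then have "ereal (norm x * (\<alpha> * (1 - s - 1 / norm x))) \<le> 0" by (simp add: zero_ereal_def)
      also have "0 \<le> path_time C p" by (rule path_time_nonneg)
      finally show ?thesis using Rs by simp
    next
      case False
      obtain q where q: "is_path q" "hd q = 0" "last q = x"
         "path_time C p \<ge> ereal (\<alpha> * (path_len q - 1 - path_A (xi \<alpha> C) q))"
        using path_reduce[OF p] by blast
      have qne: "q \<noteq> []" using q by (simp add: is_path_def)
      have lq: "path_len q \<ge> norm x" using path_len_ge[OF qne] q by simp
      have A: "path_A (xi \<alpha> C) q \<le> s * path_len q" using A_le_sl[OF q(1-3) x real] by simp
      have "norm x * (\<alpha> * (1 - s - 1 / norm x)) = \<alpha> * (norm x * (1 - s) - 1)"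
        using x0 by (simp add: field_simps)
      also have "\<dots> \<le> \<alpha> * (path_len q * (1 - s) - 1)"
        using lq False apos by (intro mult_left_mono) (auto intro: mult_right_mono)
      also have "\<dots> \<le> \<alpha> * (path_len q - 1 - path_A (xi \<alpha> C) q)"
        using A apos by (intro mult_left_mono) (auto simp: algebra_simps)
      finally have "ereal (norm x * (\<alpha> * (1 - s - 1 / norm x))) \<le> ereal (\<alpha> * (path_len q - 1 - path_A (xi \<alpha> C) q))"
        by simp
      also note q(4)
      finally show ?thesis using Rs by simp
    qed
  qed
  then have "ereal (norm x) * R \<le> passage_time C (cball 0 1) x"
    unfolding passage_time_def by (intro INF_greatest) auto
  moreover have "ereal (norm x) > 0" using x0 by simp
  ultimately have "R \<le> passage_time C (cball 0 1) x / ereal (norm x)"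
    using ereal_le_divide_pos[of "ereal (norm x)" R] by simp
  then show ?thesis unfolding R_def .
qed

end


lemma intensity_box:
  fixes A :: "(real ^ 'd::finite) set"
  assumes mu: "prob_space \<mu>" "sets \<mu> = sets borel"
  and AB: "A \<in> sets borel" "B \<in> sets borel" "C \<in> sets borel"
  shows "A \<times> (B \<times> C) \<in> sets (intensity \<mu> :: 'd pt measure)"
    and "emeasure (intensity \<mu> :: 'd pt measure) (A \<times> (B \<times> C))
          = emeasure lborel A * (emeasure lborel (B \<inter> {0..}) * emeasure \<mu> C)"
proof -
  let ?D = "density lborel (indicator {0..} :: real \<Rightarrow> ennreal)"
  have SD: "sigma_finite_measure ?D"
    by (subst sigma_finite_measure.sigma_finite_iff_density_finite'[OF sigma_finite_lborel]) (auto split: split_indicator)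
  have Smu: "sigma_finite_measure \<mu>" using mu by (simp add: prob_space_imp_sigma_finite)
  have S2: "sigma_finite_measure (?D \<Otimes>\<^sub>M \<mu>)" by (rule sigma_finite_pair_measure[OF SD Smu])
  have BC: "B \<times> C \<in> sets (?D \<Otimes>\<^sub>M \<mu>)" using AB mu by (intro pair_measureI) auto
  show "A \<times> (B \<times> C) \<in> sets (intensity \<mu> :: 'd pt measure)"
    unfolding intensity_def using AB BC mu by (intro pair_measureI) auto
  have "emeasure (intensity \<mu> :: 'd pt measure) (A \<times> (B \<times> C))
     = emeasure lborel A * emeasure (?D \<Otimes>\<^sub>M \<mu>) (B \<times> C)"
    unfolding intensity_def using AB BC
    by (intro sigma_finite_measure.emeasure_pair_measure_Times[OF S2]) auto
  also have "emeasure (?D \<Otimes>\<^sub>M \<mu>) (B \<times> C) = emeasure ?D B * emeasure \<mu> C"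
    using AB mu by (intro sigma_finite_measure.emeasure_pair_measure_Times[OF Smu]) auto
  also have "emeasure ?D B = emeasure lborel (B \<inter> {0..})"
  proof -
    have "emeasure ?D B = (\<integral>\<^sup>+ x. indicator {0..} x * indicator B x \<partial>lborel)"
      using AB by (intro emeasure_density) auto
    also have "\<dots> = (\<integral>\<^sup>+ x. indicator (B \<inter> {0..}) x \<partial>lborel)"
      by (intro nn_integral_cong) (auto split: split_indicator)
    also have "\<dots> = emeasure lborel (B \<inter> {0..})"
      using AB by (intro nn_integral_indicator) auto
    finally show ?thesis .
  qed
  finally show "emeasure (intensity \<mu> :: 'd pt measure) (A \<times> (B \<times> C))
          = emeasure lborel A * (emeasure lborel (B \<inter> {0..}) * emeasure \<mu> C)" .
qed

lemma ppp_empty: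
  assumes P: "poisson_point_process M N \<nu>" and A: "A \<in> sets \<nu>" "emeasure \<nu> A = 0"
  shows "AE \<omega> in M. N \<omega> \<inter> A = {}"
proof -
  have ps: "prob_space M" using P by (simp add: poisson_point_process_def)
  interpret prob_space M by (rule ps)
  have fin: "emeasure \<nu> A < \<infinity>" using A by simp
  have m: "measure \<nu> A = 0" using A by (simp add: measure_def)
  have cm: "(\<lambda>\<omega>. card (N \<omega> \<inter> A)) \<in> measurable M (count_space UNIV)"
    and af: "AE \<omega> in M. finite (N \<omega> \<inter> A)"
    and pk: "\<And>k. measure M {\<omega> \<in> space M. card (N \<omega> \<inter> A) = k} = measure \<nu> A ^ k / fact k * exp (- measure \<nu> A)"
    using P A fin unfolding poisson_point_process_def by blast+
  have E: "{\<omega> \<in> space M. card (N \<omega> \<inter> A) = 0} \<in> events"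
  proof -
    have "(\<lambda>\<omega>. card (N \<omega> \<inter> A)) -` {0} \<inter> space M \<in> sets M"
      by (rule measurable_sets[OF cm]) auto
    then show ?thesis by (simp add: vimage_def Int_def conj_commute)
  qed
  have "prob {\<omega> \<in> space M. card (N \<omega> \<inter> A) = 0} = 1" using pk[of 0] m by simp
  then have "AE \<omega> in M. \<omega> \<in> {\<omega> \<in> space M. card (N \<omega> \<inter> A) = 0}"
    using E by (intro AE_prob_1) auto
  with af show ?thesis by eventually_elim auto
qed

lemma ppp_ge2:
  assumes P: "poisson_point_process M N \<nu>" and A: "A \<in> sets \<nu>" "emeasure \<nu> A < \<infinity>"
  shows "{\<omega> \<in> space M. 2 \<le> card (N \<omega> \<inter> A)} \<in> sets M"
    "measure M {\<omega> \<in> space M. 2 \<le> card (N \<omega> \<inter> A)} \<le> (measure \<nu> A)\<^sup>2"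
proof -
  have ps: "prob_space M" using P by (simp add: poisson_point_process_def)
  interpret prob_space M by (rule ps)
  define l where "l = measure \<nu> A"
  have l0: "l \<ge> 0" by (simp add: l_def)
  have cm: "(\<lambda>\<omega>. card (N \<omega> \<inter> A)) \<in> measurable M (count_space UNIV)"
    and pk: "\<And>k. measure M {\<omega> \<in> space M. card (N \<omega> \<inter> A) = k} = measure \<nu> A ^ k / fact k * exp (- measure \<nu> A)"
    using P A unfolding poisson_point_process_def by blast+
  have E: "{\<omega> \<in> space M. card (N \<omega> \<inter> A) \<in> X} \<in> events" for X
  proof -
    have "(\<lambda>\<omega>. card (N \<omega> \<inter> A)) -` X \<inter> space M \<in> sets M"
      by (rule measurable_sets[OF cm]) auto
    then show ?thesis by (simp add: vimage_def Int_def conj_commute)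
  qed
  have E1: "{\<omega> \<in> space M. card (N \<omega> \<inter> A) = k} \<in> events" for k
    using E[of "{k}"] by simp
  show ev: "{\<omega> \<in> space M. 2 \<le> card (N \<omega> \<inter> A)} \<in> sets M" using E[of "{2..}"] by simp
  have split: "{\<omega> \<in> space M. 2 \<le> card (N \<omega> \<inter> A)} = space M -
     ({\<omega> \<in> space M. card (N \<omega> \<inter> A) = 0} \<union> {\<omega> \<in> space M. card (N \<omega> \<inter> A) = 1})" by auto
  have "measure M ({\<omega> \<in> space M. card (N \<omega> \<inter> A) = 0} \<union> {\<omega> \<in> space M. card (N \<omega> \<inter> A) = 1})
     = exp (- l) + l * exp (- l)"
    by (subst finite_measure_Union) (auto simp: E1 pk l_def)
  then have "measure M {\<omega> \<in> space M. 2 \<le> card (N \<omega> \<inter> A)} = 1 - (exp (- l) + l * exp (- l))"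
    unfolding split by (subst prob_compl) (auto simp: E1)
  also have "\<dots> \<le> l\<^sup>2"
  proof -
    have "1 - l \<le> exp (- l)" using exp_ge_add_one_self[of "- l"] by simp
    then have "(1 - l) * (1 + l) \<le> exp (- l) * (1 + l)" using l0 by (intro mult_right_mono) auto
    then show ?thesis by (simp add: algebra_simps power2_eq_square)
  qed
  finally show "measure M {\<omega> \<in> space M. 2 \<le> card (N \<omega> \<inter> A)} \<le> (measure \<nu> A)\<^sup>2"
    by (simp add: l_def)
qed



definition cubeC :: "nat \<Rightarrow> nat \<Rightarrow> ('d::finite \<Rightarrow> nat) \<Rightarrow> (real ^ 'd) set" where
  "cubeC N m k = cbox (\<chi> i. - real (Suc N) + real (k i) / real (Suc m))
                      (\<chi> i. - real (Suc N) + (real (k i) + 1) / real (Suc m))"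

definition cubeR :: "nat \<Rightarrow> nat \<Rightarrow> ('d::finite \<Rightarrow> nat) \<Rightarrow> 'd pt set" where
  "cubeR N m k = cubeC N m k \<times> ({- real (Suc N)..real (Suc N)} \<times> UNIV)"

definition idx :: "nat \<Rightarrow> nat \<Rightarrow> ('d::finite \<Rightarrow> nat) set" where
  "idx N m = PiE UNIV (\<lambda>_. {0..2 * Suc N * Suc m})"

lemma finite_idx: "finite (idx N m)" unfolding idx_def by (intro finite_PiE) auto

lemma card_idx: "card (idx N m :: ('d::finite \<Rightarrow> nat) set) = (2 * Suc N * Suc m + 1) ^ CARD('d)"
  unfolding idx_def by (subst card_PiE) auto

lemma emeasure_cubeC: "emeasure lborel (cubeC N m k :: (real ^ 'd::finite) set) = ennreal ((1 / real (Suc m)) ^ CARD('d))"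
proof -
  let ?l = "(\<chi> i. - real (Suc N) + real (k i) / real (Suc m)) :: real ^ 'd"
  let ?u = "(\<chi> i. - real (Suc N) + (real (k i) + 1) / real (Suc m)) :: real ^ 'd"
  have ub: "(?u - ?l) \<bullet> b = 1 / real (Suc m)" if bB: "b \<in> Basis" for b
  proof -
    obtain i where "b = axis i 1" using bB unfolding Basis_vec_def Basis_real_def by auto
    then show ?thesis by (simp add: inner_axis add_divide_distrib)
  qed
  have le: "\<forall>b\<in>Basis. ?l \<bullet> b \<le> ?u \<bullet> b"
  proof
    fix b :: "real ^ 'd" assume "b \<in> Basis"
    then have "0 \<le> (?u - ?l) \<bullet> b" using ub[of b] by simp
    then show "?l \<bullet> b \<le> ?u \<bullet> b" by (simp add: inner_diff_left)
  qed
  have "emeasure lborel (cbox ?l ?u) = (\<Prod>b\<in>Basis. (?u - ?l) \<bullet> b)"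
    using le by (simp add: emeasure_lborel_cbox_eq)
  also have "(\<Prod>b\<in>(Basis :: (real^'d) set). (?u - ?l) \<bullet> b) = (1 / real (Suc m)) ^ CARD('d)"
    using ub by simp
  finally show ?thesis unfolding cubeC_def by simp
qed

lemma cube_cover:
  fixes c :: "real ^ 'd::finite"
  assumes "\<And>i. \<bar>c $ i\<bar> \<le> real (Suc N)"
  shows "\<exists>k \<in> idx N m. c \<in> cubeC N m k"
proof -
  define n where "n = real (Suc N)"
  define mm where "mm = real (Suc m)"
  have mm0: "mm > 0" by (simp add: mm_def)
  define k where "k i = nat \<lfloor>(c $ i + n) * mm\<rfloor>" for i
  have y0: "(c $ i + n) * mm \<ge> 0" for i using assms[of i] mm0 by (simp add: n_def abs_le_iff)
  have kf: "real (k i) = of_int \<lfloor>(c $ i + n) * mm\<rfloor>" for i using y0[of i] by (simp add: k_def)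
  have kl: "real (k i) \<le> (c $ i + n) * mm" "(c $ i + n) * mm < real (k i) + 1" for i
    using kf[of i] by linarith+
  have b2: "(c $ i + n) * mm \<le> 2 * n * mm" for i using assms[of i] mm0 by (intro mult_right_mono) (auto simp: n_def abs_le_iff)
  have "real (k i) \<le> 2 * n * mm" for i using kl(1)[of i] b2[of i] by linarith
  then have "real (k i) \<le> real (2 * Suc N * Suc m)" for i unfolding n_def mm_def by (simp add: algebra_simps)
  then have "k i \<le> 2 * Suc N * Suc m" for i by (metis of_nat_le_iff)
  then have "k \<in> idx N m" unfolding idx_def by (auto simp: PiE_UNIV_domain)
  moreover have "c \<in> cubeC N m k"
    unfolding cubeC_def mem_box_cart
  proof
    fix i
    have "real (k i) / mm \<le> c $ i + n" using kl(1)[of i] mm0 by (simp add: divide_le_eq)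
    moreover have "c $ i + n \<le> (real (k i) + 1) / mm" using kl(2)[of i] mm0 by (simp add: le_divide_eq)
    ultimately show "(\<chi> i. - real (Suc N) + real (k i) / real (Suc m)) $ i \<le> c $ i \<and>
          c $ i \<le> (\<chi> i. - real (Suc N) + (real (k i) + 1) / real (Suc m)) $ i"
      by (simp add: n_def mm_def)
  qed
  ultimately show ?thesis by blast
qed


lemma le_zero_by_inverse:
  fixes a C :: real
  assumes "\<And>m. a \<le> C / real (Suc m)" "C \<ge> 0"
  shows "a \<le> 0"
proof (rule ccontr)
  assume "\<not> a \<le> 0"
  then have "a / (C + 1) > 0" using assms(2) by simp
  then obtain n where n: "n > 0" "inverse (real n) < a / (C + 1)" using ex_inverse_of_nat_less by blast
  then obtain m where m: "n = Suc m" by (cases n) auto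
  have "C / real (Suc m) \<le> (C + 1) / real (Suc m)" by (simp add: divide_right_mono)
  also have "\<dots> = (C + 1) * inverse (real n)" using m by (simp add: field_simps)
  also have "\<dots> < (C + 1) * (a / (C + 1))" using n assms(2) by (intro mult_strict_left_mono) auto
  also have "\<dots> = a" using assms(2) by simp
  finally show False using assms(1)[of m] by simp
qed

lemma bound_arith:
  fixes n mm :: real and D :: nat
  assumes "n \<ge> 1" "mm \<ge> 1" "D \<ge> 1"
  shows "(2 * n * mm + 1) ^ D * ((1 / mm) ^ D * n)\<^sup>2 \<le> (3 * n) ^ D * n\<^sup>2 / mm"
proof -
  have nm: "1 \<le> n * mm" using assms mult_mono[of 1 n 1 mm] by simp
  have "(2 * n * mm + 1) ^ D \<le> (3 * n * mm) ^ D"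
    by (rule power_mono) (use nm in linarith)+
  then have "(2 * n * mm + 1) ^ D * ((1 / mm) ^ D * n)\<^sup>2 \<le> (3 * n * mm) ^ D * ((1 / mm) ^ D * n)\<^sup>2"
    by (rule mult_right_mono) simp
  also have "(3 * n * mm) ^ D * ((1 / mm) ^ D * n)\<^sup>2 = (3 * n) ^ D * ((mm * (1/mm)) ^ D * ((1 / mm) ^ D * n\<^sup>2))"
    by (simp only: power_mult_distrib power2_eq_square mult_ac)
  also have "mm * (1/mm) = 1" using assms by simp
  also have "(3 * n) ^ D * (1 ^ D * ((1 / mm) ^ D * n\<^sup>2)) \<le> (3 * n) ^ D * ((1 / mm) ^ 1 * n\<^sup>2)"
  proof -
    have "(1 / mm) ^ D \<le> (1 / mm) ^ 1" using assms by (intro power_decreasing) auto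
    then have "(1 / mm) ^ D * n\<^sup>2 \<le> (1 / mm) ^ 1 * n\<^sup>2" by (rule mult_right_mono) simp
    moreover have "0 \<le> (3 * n) ^ D" using assms by simp
    ultimately have "(3 * n) ^ D * ((1 / mm) ^ D * n\<^sup>2) \<le> (3 * n) ^ D * (n\<^sup>2 / mm)"
      by (intro mult_left_mono) simp_all
    then show ?thesis by simp
  qed
  also have "\<dots> = (3 * n) ^ D * n\<^sup>2 / mm" by simp
  finally show ?thesis .
qed

lemma uniq_N:
  fixes chi :: "'a \<Rightarrow> ('d::finite) pt set"
  assumes P: "poisson_point_process M chi (intensity \<mu>)" and mu: "prob_space \<mu>" "sets \<mu> = sets borel"
  shows "AE \<omega> in M. \<forall>p\<in>chi \<omega>. \<forall>q\<in>chi \<omega>. p \<noteq> q \<longrightarrow> fst p = fst q \<longrightarrow>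
     (\<forall>i. \<bar>fst p $ i\<bar> \<le> real (Suc N)) \<longrightarrow> \<bar>fst (snd p)\<bar> \<le> real (Suc N) \<longrightarrow>
     \<bar>fst (snd q)\<bar> \<le> real (Suc N) \<longrightarrow> False"
proof -
  have ps: "prob_space M" using P by (simp add: poisson_point_process_def)
  interpret prob_space M by (rule ps)
  let ?\<nu> = "intensity \<mu> :: 'd pt measure"
  define n where "n = real (Suc N)"
  define lam where "lam m = (1 / real (Suc m)) ^ CARD('d) * n" for m
  have spmu: "space \<mu> = UNIV" using sets_eq_imp_space_eq[OF mu(2)] by simp
  have mu1: "emeasure \<mu> UNIV = 1" using prob_space.emeasure_space_1[OF mu(1)] spmu by simp
  have Rs: "cubeR N m k \<in> sets ?\<nu>" and Re: "emeasure ?\<nu> (cubeR N m k) = ennreal (lam m)" for m k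
  proof -
    have cb: "cubeC N m k \<in> sets borel" unfolding cubeC_def by (simp add: borel_closed)
    show "cubeR N m k \<in> sets ?\<nu>" unfolding cubeR_def using intensity_box(1)[OF mu cb] by simp
    have "{- real (Suc N)..real (Suc N)} \<inter> {0..} = {0..real (Suc N)}" by auto
    then have "emeasure ?\<nu> (cubeR N m k) = ennreal ((1 / real (Suc m)) ^ CARD('d)) * (ennreal n * 1)"
      unfolding cubeR_def using intensity_box(2)[OF mu cb, of "{- real (Suc N)..real (Suc N)}" UNIV]
      by (simp add: emeasure_cubeC mu1 n_def)
    also have "\<dots> = ennreal (lam m)" unfolding lam_def by (simp add: ennreal_mult n_def)
    finally show "emeasure ?\<nu> (cubeR N m k) = ennreal (lam m)" .
  qed
  have lam0: "lam m \<ge> 0" for m by (simp add: lam_def n_def)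
  have Rm: "measure ?\<nu> (cubeR N m k) = lam m" for m k using Re[of m k] lam0[of m] by (simp add: measure_def)
  define G where "G m k = {\<omega> \<in> space M. 2 \<le> card (chi \<omega> \<inter> cubeR N m k)}" for m k
  have Gs: "G m k \<in> events" and Gm: "prob (G m k) \<le> (lam m)\<^sup>2" for m k
    using ppp_ge2[OF P Rs[of m k]] Re[of m k] Rm[of m k] unfolding G_def by auto
  define E where "E m = (\<Union>k\<in>idx N m. G m k)" for m
  have Es: "E m \<in> events" for m unfolding E_def using Gs finite_idx by auto
  define Cst where "Cst = (3 * n) ^ CARD('d) * n\<^sup>2"
  have Em: "prob (E m) \<le> Cst / real (Suc m)" for m
  proof -
    have "prob (E m) \<le> (\<Sum>k\<in>idx N m. prob (G m k))"
      unfolding E_def using Gs finite_idx by (intro finite_measure_subadditive_finite) auto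
    also have "\<dots> \<le> real (card (idx N m :: ('d \<Rightarrow> nat) set)) * (lam m)\<^sup>2"
      using Gm by (intro sum_bounded_above) auto
    also have "\<dots> = (2 * n * real (Suc m) + 1) ^ CARD('d) * ((1 / real (Suc m)) ^ CARD('d) * n)\<^sup>2"
      unfolding card_idx lam_def n_def by (simp add: algebra_simps)
    also have "\<dots> \<le> Cst / real (Suc m)" unfolding Cst_def
      by (rule bound_arith) (auto simp: n_def)
    finally show ?thesis .
  qed
  define Bad where "Bad = space M \<inter> (\<Inter>m. E m)"
  have Bs: "Bad \<in> events" unfolding Bad_def using Es by auto
  have "prob Bad \<le> 0"
  proof (rule le_zero_by_inverse)
    fix m
    have "prob Bad \<le> prob (E m)" using Bs Es by (intro finite_measure_mono) (auto simp: Bad_def)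
    then show "prob Bad \<le> Cst / real (Suc m)" using Em[of m] by linarith
  qed (simp add: Cst_def n_def)
  then have "Bad \<in> null_sets M" using Bs by (simp add: null_sets_def emeasure_eq_measure measure_nonneg antisym)
  then have AE1: "AE \<omega> in M. \<omega> \<notin> Bad" by (rule AE_not_in)
  have AE2: "AE \<omega> in M. \<forall>m. \<forall>k\<in>idx N m. finite (chi \<omega> \<inter> cubeR N m k)"
  proof (subst AE_all_countable, intro allI AE_finite_allI[OF finite_idx])
    fix m k
    show "AE \<omega> in M. finite (chi \<omega> \<inter> cubeR N m k)"
      using P Rs[of m k] Re[of m k] unfolding poisson_point_process_def by auto
  qed
  show ?thesis
    using AE1 AE2 AE_space
  proof eventually_elim
    case (elim \<omega>)
    show ?case
    proof (intro ballI impI)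
      fix p q assume pq: "p \<in> chi \<omega>" "q \<in> chi \<omega>" "p \<noteq> q" "fst p = fst q"
        and b: "\<forall>i. \<bar>fst p $ i\<bar> \<le> real (Suc N)" "\<bar>fst (snd p)\<bar> \<le> real (Suc N)"
        "\<bar>fst (snd q)\<bar> \<le> real (Suc N)"
      obtain m where m: "\<omega> \<notin> E m" using elim unfolding Bad_def by auto
      obtain k where k: "k \<in> idx N m" "fst p \<in> cubeC N m k" using cube_cover[of "fst p" N m] b(1) by auto
      have "p \<in> cubeR N m k" "q \<in> cubeR N m k" using k b pq(4)
        by (cases p, cases q, auto simp: cubeR_def abs_le_iff)+
      then have sub: "{p, q} \<subseteq> chi \<omega> \<inter> cubeR N m k" using pq by auto
      have "2 = card {p, q}" using pq(3) by simp
      also have "\<dots> \<le> card (chi \<omega> \<inter> cubeR N m k)" using sub elim k(1) by (intro card_mono) auto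
      finally have "\<omega> \<in> G m k" using elim unfolding G_def by auto
      then have "\<omega> \<in> E m" using k(1) unfolding E_def by auto
      then show False using m by simp
    qed
  qed
qed



lemma pos_AE:
  fixes chi :: "'a \<Rightarrow> ('d::finite) pt set"
  assumes P: "poisson_point_process M chi (intensity \<mu>)" and mu: "prob_space \<mu>" "sets \<mu> = sets borel"
    and mu0: "emeasure \<mu> {.. 0} = 0"
  shows "AE \<omega> in M. \<forall>c t r. (c, t, r) \<in> chi \<omega> \<longrightarrow> 0 \<le> t \<and> 0 < r"
proof -
  let ?Z1 = "(UNIV :: (real ^ 'd) set) \<times> ({..<0::real} \<times> (UNIV :: real set))"
  let ?Z2 = "(UNIV :: (real ^ 'd) set) \<times> ((UNIV :: real set) \<times> {..0::real})"
  have "{..<0::real} \<inter> {0..} = {}" by auto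
  then have e1: "emeasure (intensity \<mu> :: 'd pt measure) ?Z1 = 0"
    using intensity_box(2)[OF mu, of "UNIV :: (real ^ 'd) set" "{..<0::real}" UNIV] by simp
  have e2: "emeasure (intensity \<mu> :: 'd pt measure) ?Z2 = 0"
    using intensity_box(2)[OF mu, of "UNIV :: (real ^ 'd) set" UNIV "{..0::real}"] mu0 by simp
  have s1: "?Z1 \<in> sets (intensity \<mu> :: 'd pt measure)" by (intro intensity_box(1)[OF mu]) auto
  have s2: "?Z2 \<in> sets (intensity \<mu> :: 'd pt measure)" by (intro intensity_box(1)[OF mu]) auto
  have "AE \<omega> in M. chi \<omega> \<inter> ?Z1 = {}" by (rule ppp_empty[OF P s1 e1])
  moreover have "AE \<omega> in M. chi \<omega> \<inter> ?Z2 = {}" by (rule ppp_empty[OF P s2 e2])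
  ultimately show ?thesis
  proof eventually_elim
    case (elim \<omega>)
    show ?case
    proof (intro allI impI)
      fix c t r assume "(c, t, r) \<in> chi \<omega>"
      then show "0 \<le> t \<and> 0 < r" using elim by (auto simp: not_le not_less)
    qed
  qed
qed

lemma uniq_AE:
  fixes chi :: "'a \<Rightarrow> ('d::finite) pt set"
  assumes P: "poisson_point_process M chi (intensity \<mu>)" and mu: "prob_space \<mu>" "sets \<mu> = sets borel"
  shows "AE \<omega> in M. \<forall>p\<in>chi \<omega>. \<forall>q\<in>chi \<omega>. fst p = fst q \<longrightarrow> p = q"
proof -
  have "AE \<omega> in M. \<forall>N. \<forall>p\<in>chi \<omega>. \<forall>q\<in>chi \<omega>. p \<noteq> q \<longrightarrow> fst p = fst q \<longrightarrow>
     (\<forall>i. \<bar>fst p $ i\<bar> \<le> real (Suc N)) \<longrightarrow> \<bar>fst (snd p)\<bar> \<le> real (Suc N) \<longrightarrow>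
     \<bar>fst (snd q)\<bar> \<le> real (Suc N) \<longrightarrow> False"
    using uniq_N[OF P mu] by (subst AE_all_countable) auto
  then show ?thesis
  proof eventually_elim
    case (elim \<omega>)
    show ?case
    proof (intro ballI impI)
      fix p q assume pq: "p \<in> chi \<omega>" "q \<in> chi \<omega>" "fst p = fst q"
      obtain N where N: "max (norm (fst p)) (max \<bar>fst (snd p)\<bar> \<bar>fst (snd q)\<bar>) < real N"
        using reals_Archimedean2 by blast
      have n1: "norm (fst p) < real N" "\<bar>fst (snd p)\<bar> < real N" "\<bar>fst (snd q)\<bar> < real N"
        using N by auto
      have b1: "\<bar>fst p $ i\<bar> \<le> real (Suc N)" for i
        using component_le_norm_cart[of "fst p" i] n1(1) by simp
      have b2: "\<bar>fst (snd p)\<bar> \<le> real (Suc N)" "\<bar>fst (snd q)\<bar> \<le> real (Suc N)" using n1 by auto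
      show "p = q"
      proof (rule ccontr)
        assume ne: "p \<noteq> q"
        have "\<forall>p\<in>chi \<omega>. \<forall>q\<in>chi \<omega>. p \<noteq> q \<longrightarrow> fst p = fst q \<longrightarrow>
           (\<forall>i. \<bar>fst p $ i\<bar> \<le> real (Suc N)) \<longrightarrow> \<bar>fst (snd p)\<bar> \<le> real (Suc N) \<longrightarrow>
           \<bar>fst (snd q)\<bar> \<le> real (Suc N) \<longrightarrow> False" using elim by (rule spec)
        from this[rule_format, OF pq(1) pq(2) ne pq(3) b1 b2] show False .
      qed
    qed
  qed
qed

theorem lemma2p4:
  fixes M :: "'a measure"
    and chi :: "'a \<Rightarrow> ('d::finite) pt set"
    and \<mu> :: "real measure"
    and \<alpha> :: real
  assumes "prob_space \<mu>" and "sets \<mu> = sets borel" and "emeasure \<mu> {.. 0} = 0"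
    and "\<alpha> > 0"
    and "poisson_point_process M chi (intensity \<mu>)"
  shows "AE \<omega> in M. \<forall>x :: real ^ 'd. x \<notin> cball 0 1 \<longrightarrow>
           passage_time (chi \<omega>) (cball 0 1) x / ereal (norm x)
             \<ge> ereal \<alpha> * (1 - S (norm x) (xi \<alpha> (chi \<omega>)) - ereal (1 / norm x))"
  using pos_AE[OF assms(5,1,2,3)] uniq_AE[OF assms(5,1,2)]
proof eventually_elim
  case (elim \<omega>)
  interpret goodcfg "chi \<omega>" \<alpha>
  proof
    fix c t r assume "(c, t, r) \<in> chi \<omega>" then show "0 \<le> t \<and> 0 < r" using elim by blast
  next
    fix p q assume "p \<in> chi \<omega>" "q \<in> chi \<omega>" "fst p = fst q" then show "p = q" using elim by blast
  qed (rule assms(4))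
  show ?case using main_det by blast
qed


end
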